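(* Let $I$ be an instance of OWA-k-Median with facilities $\mathcal{F}$, clients $D_1,\dots,D_n$, costs $c_{ij}$, integer $k$, and non-increasing nonnegative rational weights $w_\ell=p_\ell/q_\ell$ (in lowest terms), $\ell\in[k]$. Let $Q=\prod_{r=1}^k q_r$ and construct the instance $I'$ of Fault-Tolerant $k$-Median with Multiplicities with the same facilities, same $k$, and in which each client $D_j$ is replaced by clients $D_{j,1},\dots,D_{j,k}$ located where $D_j$ is (i.e., with the same costs $c_{i,(j,\ell)}=c_{ij}$), where $D_{j,\ell}$ has connectivity requirement $\ell$ and multiplicity $m_{j,\ell}=(w_\ell-w_{\ell+1})Q$ for $\ell\in[k-1]$ and $m_{j,k}=w_kQ$. Then for every $\alpha\ge1$, every $\alpha$-approximate solution to $I'$ is an $\alpha$-approximate solution to $I$.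
   Context: OWA-k-Median: for a $k$-set $C$ of facilities and client $D_j$, let $c^{\rightarrow}_1(C,j)\le\dots\le c^{\rightarrow}_k(C,j)$ be the costs $\{c_{ij}:F_i\in C\}$ in non-decreasing order; the objective is to minimize $\sum_{j}\sum_{i=1}^k w_i c^{\rightarrow}_i(C,j)$ over $k$-sets $C$. Fault-Tolerant $k$-Median with Multiplicities: clients $D'$ with requirements $r\in[k]$ and multiplicities $m\in\mathbb{N}$; a $k$-set $C$ of facilities has cost $\sum_{D'} m_{D'}\cdot(\text{sum of costs of the } r_{D'} \text{ facilities of } C \text{ closest to } D')$, to be minimized. A solution is $\alpha$-approximate if its cost is at most $\alpha$ times the optimum. *)

theory Defs
  imports Complex_Main "HOL-Library.Multiset"
begin

definition sorted_costs :: "('f \<Rightarrow> 'c \<Rightarrow> real) \<Rightarrow> 'f set \<Rightarrow> 'c \<Rightarrow> real list" where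
  "sorted_costs c C j = sorted_list_of_multiset (image_mset (\<lambda>i. c i j) (mset_set C))"

definition owa_cost :: "('f \<Rightarrow> 'c \<Rightarrow> real) \<Rightarrow> 'c set \<Rightarrow> nat \<Rightarrow> (nat \<Rightarrow> real) \<Rightarrow> 'f set \<Rightarrow> real" where
  "owa_cost c D k w C = (\<Sum>j\<in>D. \<Sum>l=1..k. w l * (sorted_costs c C j ! (l - 1)))"

definition ftm_cost :: "('f \<Rightarrow> 'c \<Rightarrow> real) \<Rightarrow> 'c set \<Rightarrow> ('c \<Rightarrow> nat) \<Rightarrow> ('c \<Rightarrow> real) \<Rightarrow> 'f set \<Rightarrow> real" where
  "ftm_cost c D r m C = (\<Sum>d\<in>D. m d * sum_list (take (r d) (sorted_costs c C d)))"

definition is_approx :: "('f set \<Rightarrow> real) \<Rightarrow> 'f set \<Rightarrow> nat \<Rightarrow> real \<Rightarrow> 'f set \<Rightarrow> bool" where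
  "is_approx cost F k \<alpha> C \<longleftrightarrow> C \<subseteq> F \<and> card C = k \<and>
     (\<forall>C'. C' \<subseteq> F \<and> card C' = k \<longrightarrow> cost C \<le> \<alpha> * cost C')"

end

theory Submission
  imports Defs
begin

lemma abel_aux:
  fixes w :: "nat \<Rightarrow> real" and s :: "nat \<Rightarrow> real"
  assumes "1 \<le> n"
  shows "(\<Sum>l=1..<n. (w l - w (l+1)) * (\<Sum>t<l. s t)) + w n * (\<Sum>t<n. s t)
         = (\<Sum>l=1..n. w l * s (l - 1))"
  using assms
proof (induction n rule: dec_induct)
  case base
  then show ?case by simp
next
  case (step n)
  have "(\<Sum>l=1..<Suc n. (w l - w (l+1)) * (\<Sum>t<l. s t)) + w (Suc n) * (\<Sum>t<Suc n. s t)
     = (\<Sum>l=1..<n. (w l - w (l+1)) * (\<Sum>t<l. s t)) + w n * (\<Sum>t<n. s t) + w (Suc n) * s n"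
    using step(1) by (simp add: algebra_simps)
  also have "\<dots> = (\<Sum>l=1..Suc n. w l * s (l - 1))"
    using step by simp
  finally show ?case .
qed

lemma take_sum:
  fixes xs :: "real list"
  assumes "l \<le> length xs"
  shows "sum_list (take l xs) = (\<Sum>t<l. xs ! t)"
  using assms by (simp add: sum_list_sum_nth min_absorb1 atLeast0LessThan)

lemma ftm_eq:
  fixes c :: "'f \<Rightarrow> 'c \<Rightarrow> real" and w :: "nat \<Rightarrow> real" and Q :: real
  assumes "1 \<le> k" and "card C' = k"
  shows "ftm_cost (\<lambda>i (j, l). c i j) (D \<times> {1..k}) (\<lambda>(j, l). l)
              (\<lambda>(j, l). if l < k then (w l - w (l + 1)) * Q else w k * Q) C'
        = Q * owa_cost c D k w C'"
proof -
  have fin: "finite C'" using assms by (metis card.infinite not_one_le_zero)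
  have sc: "sorted_costs (\<lambda>i (j, l). c i j) C' (j, l) = sorted_costs c C' j" for j l
    unfolding sorted_costs_def by simp
  have len: "length (sorted_costs c C' j) = k" for j
    unfolding sorted_costs_def using assms fin
    by (metis mset_sorted_list_of_multiset size_mset size_image_mset size_mset_set)
  have inner: "(\<Sum>l\<in>{1..k}. (if l < k then (w l - w (l + 1)) * Q else w k * Q)
                   * sum_list (take l (sorted_costs c C' j)))
        = Q * (\<Sum>l=1..k. w l * (sorted_costs c C' j ! (l - 1)))" for j
  proof -
    let ?s = "\<lambda>t. sorted_costs c C' j ! t"
    have "(\<Sum>l\<in>{1..k}. (if l < k then (w l - w (l + 1)) * Q else w k * Q)
                   * sum_list (take l (sorted_costs c C' j)))
        = (\<Sum>l\<in>{1..k}. (if l < k then (w l - w (l + 1)) * Q else w k * Q) * (\<Sum>t<l. ?s t))"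
      by (rule sum.cong) (auto simp: take_sum len)
    also have "\<dots> = (\<Sum>l\<in>{1..<k}. (if l < k then (w l - w (l + 1)) * Q else w k * Q) * (\<Sum>t<l. ?s t))
                    + w k * Q * (\<Sum>t<k. ?s t)"
    proof -
      have "{1..k} = insert k {1..<k}" using assms(1) by auto
      then show ?thesis by simp
    qed
    also have "\<dots> = Q * ((\<Sum>l=1..<k. (w l - w (l+1)) * (\<Sum>t<l. ?s t)) + w k * (\<Sum>t<k. ?s t))"
    proof -
      have "(\<Sum>l\<in>{1..<k}. (if l < k then (w l - w (l + 1)) * Q else w k * Q) * (\<Sum>t<l. ?s t))
          = (\<Sum>l\<in>{1..<k}. Q * ((w l - w (l + 1)) * (\<Sum>t<l. ?s t)))"
        by (rule sum.cong) auto
      then show ?thesis by (simp add: sum_distrib_left[symmetric] distrib_left)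
    qed
    also have "\<dots> = Q * (\<Sum>l=1..k. w l * ?s (l - 1))"
      using abel_aux[OF assms(1), of w ?s] by simp
    finally show ?thesis .
  qed
  show ?thesis
  proof -
    let ?g = "\<lambda>d. (case d of (j, l) \<Rightarrow> if l < k then (w l - w (l + 1)) * Q else w k * Q) *
        sum_list (take (case d of (j, l) \<Rightarrow> l) (sorted_costs (\<lambda>i (j, l). c i j) C' d))"
    have "(\<Sum>d\<in>D \<times> {1..k}. ?g d) = (\<Sum>j\<in>D. \<Sum>l\<in>{1..k}. ?g (j, l))"
      using sum.cartesian_product[of "\<lambda>j l. ?g (j,l)" "{1..k}" D]
      by (simp add: split_beta)
    also have "\<dots> = (\<Sum>j\<in>D. Q * (\<Sum>l=1..k. w l * (sorted_costs c C' j ! (l - 1))))"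
      by (rule sum.cong[OF refl]) (simp only: split sc inner)
    finally show ?thesis
      unfolding ftm_cost_def owa_cost_def sum_distrib_left[symmetric] .
  qed
qed

theorem lemma3:
  fixes F :: "'f set" and D :: "'c set" and c :: "'f \<Rightarrow> 'c \<Rightarrow> real"
    and k :: nat and p q :: "nat \<Rightarrow> nat" and w :: "nat \<Rightarrow> real"
    and Q :: nat and \<alpha> :: real and C :: "'f set"
  assumes "finite F" and "finite D"
    and "1 \<le> k" and "k \<le> card F"
    and "\<And>l. l \<in> {1..k} \<Longrightarrow> q l > 0 \<and> coprime (p l) (q l)"
    and "\<And>l. l \<in> {1..k} \<Longrightarrow> w l = real (p l) / real (q l)"
    and "\<And>l. l \<in> {1..<k} \<Longrightarrow> w (l + 1) \<le> w l"
    and "Q = (\<Prod>r=1..k. q r)"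
    and "\<alpha> \<ge> 1"
    and "is_approx
           (ftm_cost (\<lambda>i (j, l). c i j) (D \<times> {1..k}) (\<lambda>(j, l). l)
              (\<lambda>(j, l). if l < k then (w l - w (l + 1)) * real Q else w k * real Q))
           F k \<alpha> C"
  shows "is_approx (owa_cost c D k w) F k \<alpha> C"
proof -
  have Qpos: "real Q > 0"
    using assms(5,8) by (auto intro!: prod_pos)
  let ?f = "ftm_cost (\<lambda>i (j, l). c i j) (D \<times> {1..k}) (\<lambda>(j, l). l)
              (\<lambda>(j, l). if l < k then (w l - w (l + 1)) * real Q else w k * real Q)"
  have eq: "card C' = k \<Longrightarrow> ?f C' = real Q * owa_cost c D k w C'" for C'
    using ftm_eq[OF assms(3), of C' c D w "real Q"] by simp
  from assms(10) have C: "C \<subseteq> F" "card C = k"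
    and opt: "\<And>C'. C' \<subseteq> F \<Longrightarrow> card C' = k \<Longrightarrow> ?f C \<le> \<alpha> * ?f C'"
    unfolding is_approx_def by auto
  show ?thesis
    unfolding is_approx_def
  proof (intro conjI allI impI C)
    fix C' assume h: "C' \<subseteq> F \<and> card C' = k"
    have "real Q * owa_cost c D k w C \<le> real Q * (\<alpha> * owa_cost c D k w C')"
      using opt[of C'] h eq[of C] eq[of C'] C by (simp add: algebra_simps)
    then show "owa_cost c D k w C \<le> \<alpha> * owa_cost c D k w C'"
      using Qpos by simp
  qed
qed

end
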